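(* Let $A$ be a nonempty finite set of $n$ alternatives. If a choice rule $C$ on $A$ satisfies capacity-filling, monotonicity, and the capacity-wise weak axiom of revealed preference (CWARP), then it also satisfies the irrelevance of accepted alternatives.
   Context: Let $\mathcal{A}$ be the set of all nonempty subsets of $A$. A choice rule is a map $C$ assigning to each $(S,q)\in\mathcal{A}\times\{1,\dots,n\}$ a nonempty set $C(S,q)\subseteq S$ with $|C(S,q)|\le q$; write $R(S,q)=S\setminus C(S,q)$. Capacity-filling: for each $(S,q)$, $|C(S,q)|=\min\{|S|,q\}$. Monotonicity: for each $S\in\mathcal{A}$ and $q\in\{1,\dots,n-1\}$, $C(S,q)\subseteq C(S,q+1)$. For $q\in\{2,\dots,n\}$ and $a,b\in A$, $a$ is revealed to be preferred to $b$ at $q$ if there exists $S\in\mathcal{A}$ with $a,b\notin C(S,q-1)$, $a\in C(S,q)$ and $b\in R(S,q)$. CWARP: for each $q\in\{2,\dots,n\}$ and each $a,b\in A$, if $a$ is revealed to be preferred to $b$ at $q$, then $b$ is not revealed to be preferred to $a$ at $q$. Irrelevance of accepted alternatives: for each $S,S'\in\mathcal{A}$ and $q\in\{1,\dots,n-1\}$, if $R(S,q)=R(S',q)$ then $C(S,q+1)\cap R(S,q)=C(S',q+1)\cap R(S',q)$. *)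

theory Defs
  imports Main
begin

definition choice_rule :: "'a set \<Rightarrow> ('a set \<Rightarrow> nat \<Rightarrow> 'a set) \<Rightarrow> bool" where
  "choice_rule A C \<longleftrightarrow>
     (\<forall>S q. S \<subseteq> A \<and> S \<noteq> {} \<and> 1 \<le> q \<and> q \<le> card A \<longrightarrow>
        C S q \<noteq> {} \<and> C S q \<subseteq> S \<and> card (C S q) \<le> q)"

definition rej :: "('a set \<Rightarrow> nat \<Rightarrow> 'a set) \<Rightarrow> 'a set \<Rightarrow> nat \<Rightarrow> 'a set" where
  "rej C S q = S - C S q"

definition capacity_filling :: "'a set \<Rightarrow> ('a set \<Rightarrow> nat \<Rightarrow> 'a set) \<Rightarrow> bool" where
  "capacity_filling A C \<longleftrightarrow>
     (\<forall>S q. S \<subseteq> A \<and> S \<noteq> {} \<and> 1 \<le> q \<and> q \<le> card A \<longrightarrow>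
        card (C S q) = min (card S) q)"

definition monotonicity :: "'a set \<Rightarrow> ('a set \<Rightarrow> nat \<Rightarrow> 'a set) \<Rightarrow> bool" where
  "monotonicity A C \<longleftrightarrow>
     (\<forall>S q. S \<subseteq> A \<and> S \<noteq> {} \<and> 1 \<le> q \<and> q \<le> card A - 1 \<longrightarrow>
        C S q \<subseteq> C S (q + 1))"

definition revealed_pref ::
  "'a set \<Rightarrow> ('a set \<Rightarrow> nat \<Rightarrow> 'a set) \<Rightarrow> nat \<Rightarrow> 'a \<Rightarrow> 'a \<Rightarrow> bool" where
  "revealed_pref A C q a b \<longleftrightarrow>
     (\<exists>S. S \<subseteq> A \<and> S \<noteq> {} \<and> a \<notin> C S (q - 1) \<and> b \<notin> C S (q - 1)
          \<and> a \<in> C S q \<and> b \<in> rej C S q)"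

definition CWARP :: "'a set \<Rightarrow> ('a set \<Rightarrow> nat \<Rightarrow> 'a set) \<Rightarrow> bool" where
  "CWARP A C \<longleftrightarrow>
     (\<forall>q a b. 2 \<le> q \<and> q \<le> card A \<and> revealed_pref A C q a b
        \<longrightarrow> \<not> revealed_pref A C q b a)"

definition irrelevance_accepted :: "'a set \<Rightarrow> ('a set \<Rightarrow> nat \<Rightarrow> 'a set) \<Rightarrow> bool" where
  "irrelevance_accepted A C \<longleftrightarrow>
     (\<forall>S S' q. S \<subseteq> A \<and> S \<noteq> {} \<and> S' \<subseteq> A \<and> S' \<noteq> {} \<and> 1 \<le> q \<and> q \<le> card A - 1
        \<and> rej C S q = rej C S' q \<longrightarrow>
        C S (q + 1) \<inter> rej C S q = C S' (q + 1) \<inter> rej C S' q)"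

end

theory Submission
  imports Defs
begin

lemma step_single:
  fixes S X Y :: "'a set"
  assumes "finite S" "X \<subseteq> S" "card X = min (card S) q" "Y \<subseteq> S"
    "card Y = min (card S) (q+1)" "X \<subseteq> Y" "S - X \<noteq> {}"
  shows "\<exists>x. Y \<inter> (S - X) = {x}"
proof -
  have fX: "finite X" "finite Y" using assms(1,2,4) finite_subset by blast+
  have "X \<noteq> S" using assms(7) by blast
  hence "card X < card S" using assms(1,2) psubset_card_mono[of S X] by blast
  hence cS: "q < card S" using assms(3) by simp
  hence "card X = q" "card Y = q + 1" using assms by auto
  hence "card (Y - X) = 1" using card_Diff_subset[OF fX(1) assms(6)] by simp
  moreover have "Y \<inter> (S - X) = Y - X" using assms by auto
  ultimately show ?thesis by (metis card_1_singletonE)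
qed

theorem lemma1:
  fixes A :: "'a set" and C :: "'a set \<Rightarrow> nat \<Rightarrow> 'a set"
  assumes "finite A" and "A \<noteq> {}"
    and "choice_rule A C"
    and "capacity_filling A C"
    and "monotonicity A C"
    and "CWARP A C"
  shows "irrelevance_accepted A C"
  unfolding irrelevance_accepted_def
proof (intro allI impI)
  fix S S' q
  assume h: "S \<subseteq> A \<and> S \<noteq> {} \<and> S' \<subseteq> A \<and> S' \<noteq> {} \<and> 1 \<le> q \<and> q \<le> card A - 1
        \<and> rej C S q = rej C S' q"
  have cA: "card A \<ge> 1" using assms(1,2) by (simp add: Suc_le_eq card_gt_0_iff)
  have q1: "1 \<le> q + 1" "q + 1 \<le> card A" "q \<le> card A" using h cA by auto
  have props: "C T q \<subseteq> T \<and> card (C T q) = min (card T) q \<and> C T (q+1) \<subseteq> T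
      \<and> card (C T (q+1)) = min (card T) (q+1) \<and> C T q \<subseteq> C T (q+1) \<and> finite T"
    if "T \<subseteq> A" "T \<noteq> {}" for T
  proof -
    have a: "C T q \<subseteq> T" "C T (q+1) \<subseteq> T"
      using assms(3)[unfolded choice_rule_def, rule_format, of T q]
        assms(3)[unfolded choice_rule_def, rule_format, of T "q+1"] that h q1 by auto
    have b: "card (C T q) = min (card T) q" "card (C T (q+1)) = min (card T) (q+1)"
      using assms(4)[unfolded capacity_filling_def, rule_format, of T q]
        assms(4)[unfolded capacity_filling_def, rule_format, of T "q+1"] that h q1 by auto
    have c: "C T q \<subseteq> C T (q+1)"
      using assms(5)[unfolded monotonicity_def, rule_format, of T q] that h by auto
    show ?thesis using a b c finite_subset[OF that(1) assms(1)] by simp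
  qed
  show "C S (q + 1) \<inter> rej C S q = C S' (q + 1) \<inter> rej C S' q"
  proof (cases "rej C S q = {}")
    case True then show ?thesis using h by simp
  next
    case False
    have ne': "rej C S' q \<noteq> {}" using False h by simp
    obtain x where x: "C S (q+1) \<inter> (S - C S q) = {x}"
      using step_single[of S "C S q" q "C S (q+1)"] props[of S] h False
      unfolding rej_def by blast
    obtain y where y: "C S' (q+1) \<inter> (S' - C S' q) = {y}"
      using step_single[of S' "C S' q" q "C S' (q+1)"] props[of S'] h ne'
      unfolding rej_def by blast
    have R: "S - C S q = S' - C S' q" using h unfolding rej_def by simp
    have xa: "x \<in> C S (q+1)" "x \<in> S - C S q" using x by blast+
    have ya: "y \<in> C S' (q+1)" "y \<in> S' - C S' q" using y by blast+
    have xo: "z = x" if "z \<in> C S (q+1)" "z \<in> S - C S q" for z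
      using x that by blast
    have yo: "z = y" if "z \<in> C S' (q+1)" "z \<in> S' - C S' q" for z
      using y that by blast
    show ?thesis
    proof (cases "x = y")
      case True then show ?thesis using x y unfolding rej_def by (simp only:)
    next
      case False
      have "revealed_pref A C (q+1) x y"
        unfolding revealed_pref_def rej_def
      proof (rule exI[of _ S], intro conjI)
        show "S \<subseteq> A" "S \<noteq> {}" using h by auto
        show "x \<notin> C S (q + 1 - 1)" "y \<notin> C S (q + 1 - 1)" "x \<in> C S (q + 1)"
          using xa ya R by auto
        have "y \<in> S - C S q" using ya R by simp
        moreover have "y \<notin> C S (q+1)" using xo[of y] False \<open>y \<in> S - C S q\<close> by blast
        ultimately show "y \<in> S - C S (q + 1)" by blast
      qed
      moreover have "revealed_pref A C (q+1) y x"
        unfolding revealed_pref_def rej_def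
      proof (rule exI[of _ S'], intro conjI)
        show "S' \<subseteq> A" "S' \<noteq> {}" using h by auto
        show "y \<notin> C S' (q + 1 - 1)" "x \<notin> C S' (q + 1 - 1)" "y \<in> C S' (q + 1)"
          using xa ya R by auto
        have "x \<in> S' - C S' q" using xa R by simp
        moreover have "x \<notin> C S' (q+1)" using yo[of x] False \<open>x \<in> S' - C S' q\<close> by blast
        ultimately show "x \<in> S' - C S' (q + 1)" by blast
      qed
      moreover have "2 \<le> q + 1" using h by simp
      ultimately show ?thesis using assms(6)[unfolded CWARP_def, rule_format, of "q+1" x y] q1 by auto
    qed
  qed
qed

end
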